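(* For every reachable pointed lasso automaton $X=(X_1,X_2,\overline{x},\delta_1,\delta_2,\delta_3)$, the pair $(\ker\delta_1^\sharp,\ker\delta^\sharp)$ is a bisimulation congruence on $(\Sigma^\ast,\Sigma^{\ast+})$; and if there is a morphism $h:X\to Y$ between reachable pointed lasso automata, then $\ker\delta_{X,1}^\sharp\subseteq\ker\delta_{Y,1}^\sharp$ and $\ker\delta_X^\sharp\subseteq\ker\delta_Y^\sharp$. (That is, $T(X)=(\ker\delta_1^\sharp,\ker\delta^\sharp)$ defines a functor $T$ from reachable pointed lasso automata to bisimulation congruences ordered by inclusion.)
   Context: $\Sigma$ is a finite alphabet, $\Sigma^+$ nonempty words, $\Sigma^{\ast+}=\Sigma^\ast\times\Sigma^+$ the lassos. A pointed lasso automaton is $(X_1,X_2,\overline{x},\delta_1,\delta_2,\delta_3)$ with disjoint $X_1,X_2$, $\overline{x}\in X_1$, $\delta_1:X_1\times\Sigma\to X_1$, $\delta_2:X_1\times\Sigma\to X_2$, $\delta_3:X_2\times\Sigma\to X_2$. Extend $\delta_1,\delta_3$ to words, set $\delta_\circ(x,av)=\delta_3(\delta_2(x,a),v)$ for $x\in X_1$, and $\delta(x,(u,v))=\delta_\circ(\delta_1(x,u),v)$. It is reachable if every $x\in X_1$ is $\delta_1(\overline{x},w)$ for some $w\in\Sigma^\ast$ and every $y\in X_2$ is $\delta(\overline{x},(u,v))$ for some lasso. A morphism is a pair of maps $h_1:X_1\to Y_1$, $h_2:X_2\to Y_2$ preserving initial states and commuting with $\delta_1,\delta_2,\delta_3$.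 $\ker\delta_1^\sharp=\{(u,v)\in\Sigma^\ast\times\Sigma^\ast\mid\forall x\in X_1:\delta_1(x,u)=\delta_1(x,v)\}$, $\ker\delta^\sharp=\{((u,v),(u',v'))\in\Sigma^{\ast+}\times\Sigma^{\ast+}\mid\forall x\in X_1:\delta(x,(u,v))=\delta(x,(u',v'))\}$. A bisimulation congruence is a pair $(C_1,C_2)$ of equivalence relations on $\Sigma^\ast$ and $\Sigma^{\ast+}$ such that: $C_1$ is a monoid congruence on $\Sigma^\ast$; $(w,w')\in C_1$ and $((u,v),(u',v'))\in C_2$ imply $((wu,v),(w'u',v'))\in C_2$; $(u,u')\in C_1$ implies $(ua,u'a)\in C_1$ and $((u,a),(u',a))\in C_2$ for $a\in\Sigma$; $((u,v),(u',v'))\in C_2$ implies $((u,va),(u',v'a))\in C_2$. *)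

theory Defs
  imports Main
begin

definition lassos :: "('a list \<times> 'a list) set" where
  "lassos = {(u, v). v \<noteq> []}"

text \<open>A pointed lasso automaton is given by its components; X1 and X2 are the
  (disjoint) carrier types 'x1 and 'x2.\<close>

definition delta1w :: "('x1 \<Rightarrow> 'a \<Rightarrow> 'x1) \<Rightarrow> 'x1 \<Rightarrow> 'a list \<Rightarrow> 'x1" where
  "delta1w d1 x w = foldl d1 x w"

definition delta3w :: "('x2 \<Rightarrow> 'a \<Rightarrow> 'x2) \<Rightarrow> 'x2 \<Rightarrow> 'a list \<Rightarrow> 'x2" where
  "delta3w d3 y w = foldl d3 y w"

fun delta_circ :: "('x1 \<Rightarrow> 'a \<Rightarrow> 'x2) \<Rightarrow> ('x2 \<Rightarrow> 'a \<Rightarrow> 'x2) \<Rightarrow> 'x1 \<Rightarrow> 'a list \<Rightarrow> 'x2" where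
  "delta_circ d2 d3 x (a # v) = delta3w d3 (d2 x a) v"
| "delta_circ d2 d3 x [] = undefined"

definition delta_lasso ::
  "('x1 \<Rightarrow> 'a \<Rightarrow> 'x1) \<Rightarrow> ('x1 \<Rightarrow> 'a \<Rightarrow> 'x2) \<Rightarrow> ('x2 \<Rightarrow> 'a \<Rightarrow> 'x2) \<Rightarrow> 'x1 \<Rightarrow> 'a list \<times> 'a list \<Rightarrow> 'x2" where
  "delta_lasso d1 d2 d3 x uv = delta_circ d2 d3 (delta1w d1 x (fst uv)) (snd uv)"

definition reachable_pla ::
  "'x1 \<Rightarrow> ('x1 \<Rightarrow> 'a \<Rightarrow> 'x1) \<Rightarrow> ('x1 \<Rightarrow> 'a \<Rightarrow> 'x2) \<Rightarrow> ('x2 \<Rightarrow> 'a \<Rightarrow> 'x2) \<Rightarrow> bool" where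
  "reachable_pla x0 d1 d2 d3 \<longleftrightarrow>
     (\<forall>x::'x1. \<exists>w. x = delta1w d1 x0 w) \<and>
     (\<forall>y::'x2. \<exists>uv\<in>lassos. y = delta_lasso d1 d2 d3 x0 uv)"

definition pla_morphism ::
  "'x1 \<Rightarrow> ('x1 \<Rightarrow> 'a \<Rightarrow> 'x1) \<Rightarrow> ('x1 \<Rightarrow> 'a \<Rightarrow> 'x2) \<Rightarrow> ('x2 \<Rightarrow> 'a \<Rightarrow> 'x2) \<Rightarrow>
   'y1 \<Rightarrow> ('y1 \<Rightarrow> 'a \<Rightarrow> 'y1) \<Rightarrow> ('y1 \<Rightarrow> 'a \<Rightarrow> 'y2) \<Rightarrow> ('y2 \<Rightarrow> 'a \<Rightarrow> 'y2) \<Rightarrow>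
   ('x1 \<Rightarrow> 'y1) \<Rightarrow> ('x2 \<Rightarrow> 'y2) \<Rightarrow> bool" where
  "pla_morphism x0 d1 d2 d3 y0 e1 e2 e3 h1 h2 \<longleftrightarrow>
     h1 x0 = y0 \<and>
     (\<forall>x a. h1 (d1 x a) = e1 (h1 x) a) \<and>
     (\<forall>x a. h2 (d2 x a) = e2 (h1 x) a) \<and>
     (\<forall>y a. h2 (d3 y a) = e3 (h2 y) a)"

definition ker1 :: "('x1 \<Rightarrow> 'a \<Rightarrow> 'x1) \<Rightarrow> ('a list \<times> 'a list) set" where
  "ker1 d1 = {(u, v). \<forall>x. delta1w d1 x u = delta1w d1 x v}"

definition ker_lasso ::
  "('x1 \<Rightarrow> 'a \<Rightarrow> 'x1) \<Rightarrow> ('x1 \<Rightarrow> 'a \<Rightarrow> 'x2) \<Rightarrow> ('x2 \<Rightarrow> 'a \<Rightarrow> 'x2) \<Rightarrow>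
   (('a list \<times> 'a list) \<times> ('a list \<times> 'a list)) set" where
  "ker_lasso d1 d2 d3 = {(p, q). p \<in> lassos \<and> q \<in> lassos \<and>
      (\<forall>x. delta_lasso d1 d2 d3 x p = delta_lasso d1 d2 d3 x q)}"

definition bisim_congruence ::
  "('a list \<times> 'a list) set \<Rightarrow> (('a list \<times> 'a list) \<times> ('a list \<times> 'a list)) set \<Rightarrow> bool" where
  "bisim_congruence C1 C2 \<longleftrightarrow>
     equiv UNIV C1 \<and> equiv lassos C2 \<and>
     (\<forall>u u' v v'. (u, u') \<in> C1 \<and> (v, v') \<in> C1 \<longrightarrow> (u @ v, u' @ v') \<in> C1) \<and>
     (\<forall>w w' u v u' v'. (w, w') \<in> C1 \<and> ((u, v), (u', v')) \<in> C2 \<longrightarrow>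
         ((w @ u, v), (w' @ u', v')) \<in> C2) \<and>
     (\<forall>u u' a. (u, u') \<in> C1 \<longrightarrow> (u @ [a], u' @ [a]) \<in> C1 \<and> ((u, [a]), (u', [a])) \<in> C2) \<and>
     (\<forall>u v u' v' a. ((u, v), (u', v')) \<in> C2 \<longrightarrow> ((u, v @ [a]), (u', v' @ [a])) \<in> C2)"

end

theory Submission
  imports Defs
begin

lemma d1_app: "delta1w d1 x (u @ v) = delta1w d1 (delta1w d1 x u) v"
  by (simp add: delta1w_def)

lemma dl_app: "delta_lasso d1 d2 d3 x (w @ u, v) = delta_lasso d1 d2 d3 (delta1w d1 x w) (u, v)"
  by (simp add: delta_lasso_def d1_app)

lemma dc_snoc: "v \<noteq> [] \<Longrightarrow> delta_circ d2 d3 x (v @ [a]) = d3 (delta_circ d2 d3 x v) a"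
  by (cases v) (auto simp: delta3w_def)

lemma dl_snoc: "v \<noteq> [] \<Longrightarrow> delta_lasso d1 d2 d3 x (u, v @ [a]) = d3 (delta_lasso d1 d2 d3 x (u, v)) a"
  by (simp add: delta_lasso_def dc_snoc)

lemma h1_w: "(\<forall>x a. h1 (d1 x a) = e1 (h1 x) a) \<Longrightarrow> h1 (delta1w d1 x u) = delta1w e1 (h1 x) u"
  unfolding delta1w_def by (induct u arbitrary: x) auto

lemma h2_w: "(\<forall>y a. h2 (d3 y a) = e3 (h2 y) a) \<Longrightarrow> h2 (delta3w d3 y u) = delta3w e3 (h2 y) u"
  unfolding delta3w_def by (induct u arbitrary: y) auto

lemma h_lasso:
  assumes "pla_morphism x0 d1 d2 d3 y0 e1 e2 e3 h1 h2" "v \<noteq> []"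
  shows "h2 (delta_lasso d1 d2 d3 x (u, v)) = delta_lasso e1 e2 e3 (h1 x) (u, v)"
proof -
  obtain a v' where v: "v = a # v'" using assms(2) by (cases v) auto
  have m: "\<forall>x a. h1 (d1 x a) = e1 (h1 x) a" "\<forall>x a. h2 (d2 x a) = e2 (h1 x) a"
    "\<forall>y a. h2 (d3 y a) = e3 (h2 y) a" using assms(1) unfolding pla_morphism_def by auto
  show ?thesis unfolding delta_lasso_def v
    using h2_w[OF m(3)] h1_w[OF m(1)] m(2) by simp
qed

theorem mainTheorem10:
  fixes x0 :: "'x1" and d1 :: "'x1 \<Rightarrow> 'a::finite \<Rightarrow> 'x1"
    and d2 :: "'x1 \<Rightarrow> 'a \<Rightarrow> 'x2" and d3 :: "'x2 \<Rightarrow> 'a \<Rightarrow> 'x2"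
  shows "(reachable_pla x0 d1 d2 d3 \<longrightarrow>
            bisim_congruence (ker1 d1) (ker_lasso d1 d2 d3)) \<and>
         (\<forall>(y0 :: 'y1) (e1 :: 'y1 \<Rightarrow> 'a \<Rightarrow> 'y1) (e2 :: 'y1 \<Rightarrow> 'a \<Rightarrow> 'y2)
            (e3 :: 'y2 \<Rightarrow> 'a \<Rightarrow> 'y2) h1 h2.
            reachable_pla x0 d1 d2 d3 \<and> reachable_pla y0 e1 e2 e3 \<and>
            pla_morphism x0 d1 d2 d3 y0 e1 e2 e3 h1 h2 \<longrightarrow>
            ker1 d1 \<subseteq> ker1 e1 \<and> ker_lasso d1 d2 d3 \<subseteq> ker_lasso e1 e2 e3)"
proof (intro conjI impI allI)
  show "bisim_congruence (ker1 d1) (ker_lasso d1 d2 d3)"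
    unfolding bisim_congruence_def
  proof (intro conjI allI impI)
    show "equiv UNIV (ker1 d1)"
      by (rule equivI) (auto simp: ker1_def refl_on_def sym_def trans_def)
    show "equiv lassos (ker_lasso d1 d2 d3)"
      by (rule equivI) (auto simp: ker_lasso_def refl_on_def sym_def trans_def)
  next
    fix u u' v v' :: "'a list"
    assume "(u, u') \<in> ker1 d1 \<and> (v, v') \<in> ker1 d1"
    then show "(u @ v, u' @ v') \<in> ker1 d1" by (simp add: ker1_def d1_app)
  next
    fix w w' u v u' v' :: "'a list"
    assume a: "(w, w') \<in> ker1 d1 \<and> ((u, v), u', v') \<in> ker_lasso d1 d2 d3"
    show "((w @ u, v), w' @ u', v') \<in> ker_lasso d1 d2 d3"
      using a by (simp add: ker1_def ker_lasso_def dl_app lassos_def)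
  next
    fix u u' :: "'a list" and a :: 'a
    assume "(u, u') \<in> ker1 d1"
    then show "(u @ [a], u' @ [a]) \<in> ker1 d1" by (simp add: ker1_def d1_app)
  next
    fix u u' :: "'a list" and a :: 'a
    assume "(u, u') \<in> ker1 d1"
    then show "((u, [a]), u', [a]) \<in> ker_lasso d1 d2 d3"
      by (simp add: ker1_def ker_lasso_def lassos_def delta_lasso_def)
  next
    fix u v u' v' :: "'a list" and a :: 'a
    assume "((u, v), u', v') \<in> ker_lasso d1 d2 d3"
    then show "((u, v @ [a]), u', v' @ [a]) \<in> ker_lasso d1 d2 d3"
      by (simp add: ker_lasso_def lassos_def dl_snoc)
  qed
next
  fix y0 :: 'y1 and e1 :: "'y1 \<Rightarrow> 'a \<Rightarrow> 'y1" and e2 :: "'y1 \<Rightarrow> 'a \<Rightarrow> 'y2"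
    and e3 :: "'y2 \<Rightarrow> 'a \<Rightarrow> 'y2" and h1 h2
  assume A: "reachable_pla x0 d1 d2 d3 \<and> reachable_pla y0 e1 e2 e3 \<and>
            pla_morphism x0 d1 d2 d3 y0 e1 e2 e3 h1 h2"
  then have M: "pla_morphism x0 d1 d2 d3 y0 e1 e2 e3 h1 h2" by simp
  have hm: "\<forall>x a. h1 (d1 x a) = e1 (h1 x) a" "h1 x0 = y0" using M by (auto simp: pla_morphism_def)
  have surj: "\<exists>x. y = h1 x" for y
  proof -
    obtain w where "y = delta1w e1 y0 w" using A unfolding reachable_pla_def by blast
    then have "y = h1 (delta1w d1 x0 w)" using h1_w[OF hm(1), of x0 w] hm(2) by simp
    then show ?thesis by blast
  qed
  show "ker1 d1 \<subseteq> ker1 e1"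
  proof
    fix p assume p: "p \<in> ker1 d1"
    obtain u v where pe: "p = (u, v)" by force
    have "delta1w e1 y u = delta1w e1 y v" for y
    proof -
      obtain x where "y = h1 x" using surj by blast
      then show ?thesis using p pe hm by (metis (mono_tags, lifting) case_prodD h1_w ker1_def mem_Collect_eq)
    qed
    then show "p \<in> ker1 e1" using pe by (simp add: ker1_def)
  qed
  show "ker_lasso d1 d2 d3 \<subseteq> ker_lasso e1 e2 e3"
  proof
    fix pq assume pq: "pq \<in> ker_lasso d1 d2 d3"
    obtain u v u' v' where pe: "pq = ((u, v), (u', v'))" by (metis prod.exhaust)
    have L: "v \<noteq> []" "v' \<noteq> []" using pq pe by (auto simp: ker_lasso_def lassos_def)
    have "delta_lasso e1 e2 e3 y (u, v) = delta_lasso e1 e2 e3 y (u', v')" for y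
    proof -
      obtain x where y: "y = h1 x" using surj by blast
      have "delta_lasso d1 d2 d3 x (u, v) = delta_lasso d1 d2 d3 x (u', v')"
        using pq pe by (auto simp: ker_lasso_def)
      then show ?thesis using h_lasso[OF M L(1), of x u] h_lasso[OF M L(2), of x u'] y by simp
    qed
    then show "pq \<in> ker_lasso e1 e2 e3" using pe L by (simp add: ker_lasso_def lassos_def)
  qed
qed

end
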